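(* Let $K$ be a non-archimedean local field and let $G$ be a discrete subgroup of $\mathrm{PSL}_2(K)$ with no $2$-torsion. For each vertex $v$ and each edge $e$ of the Bruhat--Tits tree $T_K$, the stabilisers $G_v$ and $G_e$ each have a unique lift to $\mathrm{SL}_2(K)$; that is, for $H\in\{G_v,G_e\}$ there exists exactly one homomorphism $\phi\colon H\to\mathrm{SL}_2(K)$ with $\pi\circ\phi=\mathrm{id}_H$, where $\pi\colon\mathrm{SL}_2(K)\to\mathrm{PSL}_2(K)$ is the quotient map.
   Context: $T_K$ is the Bruhat--Tits tree on which $\mathrm{PSL}_2(K)$ acts; $G_v$, $G_e$ denote the stabilisers in $G$ of the vertex $v$ and the edge $e$. *)

theory Defs
  imports "HOL-Analysis.Determinants" "HOL-Algebra.Coset"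
begin

text \<open>A valuation is given as a function v on K; only its values on nonzero
elements are meaningful (v 0 is irrelevant and never used).\<close>

definition discrete_valuation :: "('k::field \<Rightarrow> int) \<Rightarrow> bool" where
  "discrete_valuation v \<longleftrightarrow>
     (\<forall>x y. x \<noteq> 0 \<longrightarrow> y \<noteq> 0 \<longrightarrow> v (x * y) = v x + v y) \<and>
     (\<forall>x y. x \<noteq> 0 \<longrightarrow> y \<noteq> 0 \<longrightarrow> x + y \<noteq> 0 \<longrightarrow> v (x + y) \<ge> min (v x) (v y)) \<and>
     (\<exists>p. p \<noteq> 0 \<and> v p = 1)"

definition vclose :: "('k::field \<Rightarrow> int) \<Rightarrow> int \<Rightarrow> 'k \<Rightarrow> 'k \<Rightarrow> bool" where
  "vclose v N x y \<longleftrightarrow> x = y \<or> v (x - y) \<ge> N"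

definition val_ring :: "('k::field \<Rightarrow> int) \<Rightarrow> 'k set" where
  "val_ring v = {x. x = 0 \<or> v x \<ge> 0}"

definition val_complete :: "('k::field \<Rightarrow> int) \<Rightarrow> bool" where
  "val_complete v \<longleftrightarrow>
     (\<forall>s :: nat \<Rightarrow> 'k.
        (\<forall>N. \<exists>M. \<forall>m\<ge>M. \<forall>n\<ge>M. vclose v N (s m) (s n)) \<longrightarrow>
        (\<exists>l. \<forall>N. \<exists>M. \<forall>n\<ge>M. vclose v N (s n) l))"

text \<open>The residue field O/m is finite: finitely many residues represent every
element of the valuation ring modulo the maximal ideal.\<close>
definition finite_residue_field :: "('k::field \<Rightarrow> int) \<Rightarrow> bool" where
  "finite_residue_field v \<longleftrightarrow>
     (\<exists>R. finite R \<and> R \<subseteq> val_ring v \<and> (\<forall>x\<in>val_ring v. \<exists>r\<in>R. vclose v 1 x r))"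

definition nonarch_local_field :: "('k::field \<Rightarrow> int) \<Rightarrow> bool" where
  "nonarch_local_field v \<longleftrightarrow>
     discrete_valuation v \<and> val_complete v \<and> finite_residue_field v"

definition SL2 :: "('k::field ^2^2) monoid" where
  "SL2 = \<lparr> carrier = {A. det A = 1}, mult = (\<lambda>A B. A ** B), one = mat 1 \<rparr>"

definition centre_SL2 :: "('k::field ^2^2) set" where
  "centre_SL2 = {mat 1, - mat 1}"

definition PSL2 :: "('k::field ^2^2) set monoid" where
  "PSL2 = SL2 Mod centre_SL2"

definition proj_PSL2 :: "'k::field ^2^2 \<Rightarrow> ('k ^2^2) set" where
  "proj_PSL2 A = centre_SL2 #>\<^bsub>SL2\<^esub> A"

text \<open>Discreteness of a subgroup G of PSL2(K): some neighbourhood of the identity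
in SL2(K) meets the preimage of G only in the kernel {I,-I}.\<close>
definition discrete_PSL2 :: "('k::field \<Rightarrow> int) \<Rightarrow> ('k ^2^2) set set \<Rightarrow> bool" where
  "discrete_PSL2 v G \<longleftrightarrow>
     (\<exists>N. \<forall>A\<in>\<Union>G. (\<forall>i j. vclose v N (A $ i $ j) (mat 1 $ i $ j)) \<longrightarrow> A \<in> centre_SL2)"

definition no_2_torsion :: "('k::field ^2^2) set set \<Rightarrow> bool" where
  "no_2_torsion G \<longleftrightarrow>
     (\<forall>g\<in>G. g \<otimes>\<^bsub>PSL2\<^esub> g = \<one>\<^bsub>PSL2\<^esub> \<longrightarrow> g = \<one>\<^bsub>PSL2\<^esub>)"

definition lattice :: "('k::field \<Rightarrow> int) \<Rightarrow> ('k ^2) set \<Rightarrow> bool" where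
  "lattice v L \<longleftrightarrow>
     (\<exists>x y. x $ 1 * y $ 2 - x $ 2 * y $ 1 \<noteq> 0 \<and>
        L = {a *s x + b *s y | a b. a \<in> val_ring v \<and> b \<in> val_ring v})"

definition BT_vertex :: "('k::field \<Rightarrow> int) \<Rightarrow> ('k ^2) set set \<Rightarrow> bool" where
  "BT_vertex v V \<longleftrightarrow>
     (\<exists>L. lattice v L \<and> V = {(\<lambda>x. c *s x) ` L | c. c \<noteq> 0})"

definition BT_adjacent :: "('k::field \<Rightarrow> int) \<Rightarrow> ('k ^2) set set \<Rightarrow> ('k ^2) set set \<Rightarrow> bool" where
  "BT_adjacent v V W \<longleftrightarrow>
     (\<exists>L\<in>V. \<exists>L'\<in>W. \<exists>p. p \<noteq> 0 \<and> v p = 1 \<and>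
        (\<lambda>x. p *s x) ` L \<subset> L' \<and> L' \<subset> L)"

definition BT_edge :: "('k::field \<Rightarrow> int) \<Rightarrow> ('k ^2) set set set \<Rightarrow> bool" where
  "BT_edge v e \<longleftrightarrow>
     (\<exists>V W. BT_vertex v V \<and> BT_vertex v W \<and> BT_adjacent v V W \<and> e = {V, W})"

definition act_vertex :: "'k::field ^2^2 \<Rightarrow> ('k ^2) set set \<Rightarrow> ('k ^2) set set" where
  "act_vertex A V = (\<lambda>L. (\<lambda>x. A *v x) ` L) ` V"

definition act_edge :: "'k::field ^2^2 \<Rightarrow> ('k ^2) set set set \<Rightarrow> ('k ^2) set set set" where
  "act_edge A e = act_vertex A ` e"

text \<open>Stabilisers in G (G a subgroup of PSL2, elements are cosets {A,-A}; the
action of such an element is that of any of its representatives).\<close>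
definition stab_vertex :: "('k::field ^2^2) set set \<Rightarrow> ('k ^2) set set \<Rightarrow> ('k ^2^2) set set" where
  "stab_vertex G V = {g\<in>G. \<forall>A\<in>g. act_vertex A V = V}"

definition stab_edge :: "('k::field ^2^2) set set \<Rightarrow> ('k ^2) set set set \<Rightarrow> ('k ^2^2) set set" where
  "stab_edge G e = {g\<in>G. \<forall>A\<in>g. act_edge A e = e}"

definition unique_lift :: "('k::field ^2^2) set set \<Rightarrow> bool" where
  "unique_lift H \<longleftrightarrow>
     (\<exists>\<phi>. \<phi> \<in> hom (PSL2\<lparr>carrier := H\<rparr>) SL2 \<and> (\<forall>h\<in>H. proj_PSL2 (\<phi> h) = h) \<and>
        (\<forall>\<psi>. \<psi> \<in> hom (PSL2\<lparr>carrier := H\<rparr>) SL2 \<and> (\<forall>h\<in>H. proj_PSL2 (\<psi> h) = h)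
              \<longrightarrow> (\<forall>h\<in>H. \<psi> h = \<phi> h)))"

end

theory Submission
  imports Defs "HOL-Algebra.Sylow" "HOL-Combinatorics.Permutations"
begin

lemma mm2: "((A::'a::semiring_1^2^2) ** (B::'a^2^2))$i$j = A$i$1 * B$1$j + A$i$2 * B$2$j"
  by (simp add: matrix_matrix_mult_def sum_2)
lemma mv2: "((A::'a::semiring_1^2^2) *v (x::'a^2))$i = A$i$1 * x$1 + A$i$2 * x$2"
  by (simp add: matrix_vector_mult_def sum_2)
lemma mat_eq2: "(A::'a^2^2) = B \<longleftrightarrow> A$1$1 = B$1$1 \<and> A$1$2 = B$1$2 \<and> A$2$1 = B$2$1 \<and> A$2$2 = B$2$2"
  by (auto simp add: vec_eq_iff forall_2)
lemma vec_eq2: "(x::'a^2) = y \<longleftrightarrow> x$1 = y$1 \<and> x$2 = y$2"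
  by (auto simp add: vec_eq_iff forall_2)
lemma mat1_2: "mat 1 $ 1 $ 1 = (1::'a::zero_neq_one)" "mat 1 $ (2::2) $ 2 = (1::'a::zero_neq_one)"
   "mat 1 $ 1 $ (2::2) = (0::'a::zero_neq_one)" "mat 1 $ (2::2) $ 1 = (0::'a::zero_neq_one)"
  by (simp_all add: mat_def)

definition adj2 :: "'k::comm_ring_1^2^2 \<Rightarrow> 'k^2^2" where
 "adj2 A = (\<chi> i j. if i = 1 \<and> j = 1 then A$2$2 else if i = 1 then - A$1$2 else if j = 1 then - A$2$1 else A$1$1)"

lemma adj2_c: "adj2 A $1$1 = A$2$2" "adj2 A $1$2 = - A$1$2" "adj2 A $2$1 = - A$2$1" "adj2 A $2$2 = A$1$1"
  by (simp_all add: adj2_def)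

lemma adj2_mult: "det A = 1 \<Longrightarrow> adj2 A ** A = mat 1 \<and> A ** adj2 A = mat 1"
  by (simp add: mat_eq2 mm2 adj2_c mat1_2 det_2 algebra_simps)

lemma det_adj2: "det (adj2 A) = det (A::'k::comm_ring_1^2^2)"
  by (simp add: det_2 adj2_c algebra_simps)

lemma SL2_simps[simp]: "carrier SL2 = {A. det A = 1}" "mult SL2 = (\<lambda>A B. A ** B)" "one SL2 = mat 1"
  by (simp_all add: SL2_def)

lemma neg_mat1_mult: "(- mat 1) ** (A::'k::comm_ring_1^2^2) = - A" "A ** (- mat 1) = - A"
  by (simp_all add: mat_eq2 mm2 mat1_2)

lemma mult_neg2: "(A::'k::comm_ring_1^2^2) ** (- (B::'k^2^2)) = - (A ** B)" "(- A) ** B = - (A ** B)"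
  by (simp_all add: mat_eq2 mm2 algebra_simps)

lemma det_neg2: "det (- (A::'k::comm_ring_1^2^2)) = det A"
  by (simp add: det_2)

lemma group_SL2: "group (SL2::('k::field^2^2) monoid)"
proof (rule groupI)
  fix x y :: "'k^2^2" assume "x \<in> carrier SL2" "y \<in> carrier SL2"
  then show "x \<otimes>\<^bsub>SL2\<^esub> y \<in> carrier SL2" by (simp add: det_mul)
next
  show "\<one>\<^bsub>SL2\<^esub> \<in> (carrier SL2 :: ('k^2^2) set)" by simp
next
  fix x y z :: "'k^2^2"
  show "x \<otimes>\<^bsub>SL2\<^esub> y \<otimes>\<^bsub>SL2\<^esub> z = x \<otimes>\<^bsub>SL2\<^esub> (y \<otimes>\<^bsub>SL2\<^esub> z)"
    by (simp add: matrix_mul_assoc)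
next
  fix x :: "'k^2^2" show "\<one>\<^bsub>SL2\<^esub> \<otimes>\<^bsub>SL2\<^esub> x = x" by simp
next
  fix x :: "'k^2^2" assume "x \<in> carrier SL2"
  then show "\<exists>y\<in>carrier SL2. y \<otimes>\<^bsub>SL2\<^esub> x = \<one>\<^bsub>SL2\<^esub>"
    by (intro bexI[of _ "adj2 x"]) (simp_all add: adj2_mult det_adj2)
qed

lemma inv_SL2: "det (A::'k::field^2^2) = 1 \<Longrightarrow> inv\<^bsub>SL2\<^esub> A = adj2 A"
  by (rule group.inv_equality[OF group_SL2]) (simp_all add: adj2_mult det_adj2)

lemma centre_sub: "centre_SL2 \<subseteq> (carrier SL2 :: ('k::field^2^2) set)"
  by (auto simp: centre_SL2_def det_neg2)

lemma subgroup_centre: "subgroup centre_SL2 (SL2::('k::field^2^2) monoid)"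
proof
  show "centre_SL2 \<subseteq> (carrier SL2 :: ('k::field^2^2) set)" by (rule centre_sub)
next
  fix x y :: "'k^2^2" assume "x \<in> centre_SL2" "y \<in> centre_SL2"
  then show "x \<otimes>\<^bsub>SL2\<^esub> y \<in> centre_SL2"
    by (auto simp: centre_SL2_def neg_mat1_mult)
next
  show "\<one>\<^bsub>SL2\<^esub> \<in> (centre_SL2 :: ('k::field^2^2) set)" by (simp add: centre_SL2_def)
next
  fix x :: "'k^2^2" assume "x \<in> centre_SL2"
  moreover have "det x = 1" using \<open>x \<in> centre_SL2\<close> centre_sub by auto
  ultimately show "inv\<^bsub>SL2\<^esub> x \<in> centre_SL2"
    by (auto simp: centre_SL2_def inv_SL2 mat_eq2 adj2_c mat1_2)
qed

lemma normal_centre: "centre_SL2 \<lhd> (SL2::('k::field^2^2) monoid)"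
  unfolding group.normal_inv_iff[OF group_SL2]
proof (intro conjI subgroup_centre ballI)
  fix x h :: "'k^2^2" assume x: "x \<in> carrier SL2" and h: "h \<in> centre_SL2"
  have "x ** adj2 x = mat 1" using x adj2_mult by auto
  then show "x \<otimes>\<^bsub>SL2\<^esub> h \<otimes>\<^bsub>SL2\<^esub> inv\<^bsub>SL2\<^esub> x \<in> centre_SL2"
    using x h by (auto simp: centre_SL2_def inv_SL2 neg_mat1_mult mult_neg2
        matrix_mul_assoc[symmetric])
qed

lemma group_PSL2: "group (PSL2::('k::field^2^2) set monoid)"
  unfolding PSL2_def by (rule normal.factorgroup_is_group[OF normal_centre])

lemma proj_eq: "proj_PSL2 (A::'k::field^2^2) = {A, -A}"
  by (auto simp: proj_PSL2_def r_coset_def centre_SL2_def neg_mat1_mult)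

lemma carrier_PSL2: "carrier PSL2 = proj_PSL2 ` (carrier SL2 :: ('k::field^2^2) set)"
  unfolding PSL2_def carrier_FactGroup proj_PSL2_def by simp

lemma mult_PSL2: "A \<in> carrier SL2 \<Longrightarrow> B \<in> carrier SL2 \<Longrightarrow>
   proj_PSL2 (A::'k::field^2^2) \<otimes>\<^bsub>PSL2\<^esub> proj_PSL2 B = proj_PSL2 (A ** B)"
  unfolding PSL2_def proj_PSL2_def mult_FactGroup
  by (simp add: normal.rcos_sum[OF normal_centre])

lemma inv_PSL2: "A \<in> carrier SL2 \<Longrightarrow> inv\<^bsub>PSL2\<^esub> proj_PSL2 (A::'k::field^2^2) = proj_PSL2 (adj2 A)"
  unfolding PSL2_def proj_PSL2_def
  by (simp add: normal.inv_FactGroup[OF normal_centre] carrier_FactGroup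
        normal.rcos_inv[OF normal_centre] inv_SL2)

lemma one_PSL2: "\<one>\<^bsub>PSL2\<^esub> = proj_PSL2 (mat 1::'k::field^2^2)"
  by (simp add: PSL2_def proj_eq centre_SL2_def)

lemma mult_PSL2_set: "g \<otimes>\<^bsub>PSL2\<^esub> h = {X ** Y | X Y. X \<in> g \<and> Y \<in> h}"
  by (auto simp: PSL2_def set_mult_def)

lemma PSL2_elem: "g \<in> carrier PSL2 \<Longrightarrow> A \<in> g \<Longrightarrow> det A = 1 \<and> g = proj_PSL2 (A::'k::field^2^2)"
  by (auto simp: carrier_PSL2 proj_eq det_neg2)


lemma sign_invol:
  fixes g :: "'a \<Rightarrow> 'a"
  shows "finite S \<Longrightarrow> (\<forall>x\<in>S. g x \<in> S \<and> g x \<noteq> x \<and> g (g x) = x) \<Longrightarrow>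
     permutation (\<lambda>x. if x \<in> S then g x else x) \<and>
     sign (\<lambda>x. if x \<in> S then g x else x) = ((-1::int) ^ (card S div 2))"
proof (induction "card S" arbitrary: S rule: less_induct)
  case less
  show ?case
  proof (cases "S = {}")
    case True
    then have "(\<lambda>x. if x \<in> S then g x else x) = id" by auto
    then show ?thesis using True by simp
  next
    case False
    then obtain a where a: "a \<in> S" by auto
    define b where "b = g a"
    have b: "b \<in> S" "b \<noteq> a" "g b = a" using less.prems a b_def by auto
    define S' where "S' = S - {a, b}"
    have fS': "finite S'" using less.prems by (simp add: S'_def)
    have inv': "\<forall>x\<in>S'. g x \<in> S' \<and> g x \<noteq> x \<and> g (g x) = x"
    proof
      fix x assume x: "x \<in> S'"
      then have "x \<in> S" "x \<noteq> a" "x \<noteq> b" by (auto simp: S'_def)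
      then have "g x \<noteq> a" "g x \<noteq> b" using less.prems b b_def by metis+
      then show "g x \<in> S' \<and> g x \<noteq> x \<and> g (g x) = x"
        using less.prems \<open>x \<in> S\<close> by (auto simp: S'_def)
    qed
    have cS: "card S' = card S - 2" "card S \<ge> 2"
    proof -
      have "card S' = card S - card {a,b}" unfolding S'_def
        using a b less.prems by (intro card_Diff_subset) auto
      then show "card S' = card S - 2" using b by simp
      have "card {a,b} \<le> card S" using a b less.prems by (intro card_mono) auto
      then show "card S \<ge> 2" using b by simp
    qed
    have lt: "card S' < card S" using cS by simp
    from less.hyps[OF lt fS' inv'] have IH:
      "permutation (\<lambda>x. if x \<in> S' then g x else x)"
      "sign (\<lambda>x. if x \<in> S' then g x else x) = ((-1::int) ^ (card S' div 2))" by auto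
    have eq: "(\<lambda>x. if x \<in> S then g x else x) = Transposition.transpose a b \<circ> (\<lambda>x. if x \<in> S' then g x else x)"
    proof
      fix x
      show "(if x \<in> S then g x else x) = (Transposition.transpose a b \<circ> (\<lambda>x. if x \<in> S' then g x else x)) x"
      proof (cases "x \<in> S'")
        case True
        then have "g x \<in> S'" using inv' by auto
        then have "g x \<noteq> a" "g x \<noteq> b" by (auto simp: S'_def)
        then show ?thesis using True by (auto simp: S'_def Transposition.transpose_def)
      next
        case False
        then show ?thesis using b b_def a by (auto simp: S'_def Transposition.transpose_def)
      qed
    qed
    have d: "card S div 2 = Suc (card S' div 2)" using cS
      by (metis Suc_diff_Suc add_2_eq_Suc' diff_Suc_1 div2_Suc_Suc le_add_diff_inverse2 nat_le_iff_add)
    show ?thesis unfolding eq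
      using IH b by (simp add: permutation_compose permutation_swap_id sign_compose sign_swap_id d)
  qed
qed


lemma neg_ne_2: "(2::'k::field) \<noteq> 0 \<Longrightarrow> det (X::'k^2^2) = 1 \<Longrightarrow> - X \<noteq> X"
proof
  assume two: "(2::'k) \<noteq> 0" and d: "det X = 1" and e: "- X = X"
  have z: "\<And>y::'k. - y = y \<Longrightarrow> y = 0"
  proof -
    fix y :: 'k assume "- y = y"
    then have "2 * y = 0" by (simp add: algebra_simps)
    then show "y = 0" using two by simp
  qed
  have "X$1$1 = 0" "X$1$2 = 0" "X$2$1 = 0" "X$2$2 = 0"
    using e by (auto simp: mat_eq2 intro!: z)
  then show False using d by (simp add: det_2)
qed

lemma char2_neg: "\<not> (2::'k::field) \<noteq> 0 \<Longrightarrow> - (X::'k^2^2) = X"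
proof -
  assume "\<not> (2::'k) \<noteq> 0"
  then have "\<And>y::'k. - y = y" by (metis add_eq_0_iff mult_2 mult_zero_left one_add_one)
  then show ?thesis by (simp add: mat_eq2)
qed

lemma neg_pow_SL2: "(- (A::'k::field^2^2)) [^]\<^bsub>SL2\<^esub> (n::nat) =
    (if even n then A [^]\<^bsub>SL2\<^esub> n else - (A [^]\<^bsub>SL2\<^esub> n))"
  by (induction n) (auto simp: mult_neg2)

lemma homI2:
  assumes "H \<subseteq> carrier PSL2" "\<forall>h\<in>H. \<phi> h \<in> h"
    "\<forall>h\<in>H. \<forall>k\<in>H. \<phi> (h \<otimes>\<^bsub>PSL2\<^esub> k) = \<phi> h ** \<phi> k"
  shows "\<phi> \<in> hom (PSL2\<lparr>carrier := H\<rparr>) (SL2::('k::field^2^2) monoid) \<and> (\<forall>h\<in>H. proj_PSL2 (\<phi> h) = h)"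
proof -
  have "\<forall>h\<in>H. det (\<phi> h) = 1 \<and> h = proj_PSL2 (\<phi> h)"
    using assms(1,2) PSL2_elem by blast
  then show ?thesis using assms(3) by (auto simp: hom_def)
qed

lemma lift_unique:
  fixes H :: "('k::field^2^2) set set" and n :: nat
  assumes sub: "subgroup H PSL2" and powH: "\<And>h. h \<in> H \<Longrightarrow> h [^]\<^bsub>PSL2\<lparr>carrier := H\<rparr>\<^esub> n = \<one>\<^bsub>PSL2\<^esub>"
    and oddn: "odd n"
    and \<psi>: "\<psi> \<in> hom (PSL2\<lparr>carrier := H\<rparr>) SL2" "\<forall>h\<in>H. proj_PSL2 (\<psi> h) = h"
    and \<phi>: "\<phi> \<in> hom (PSL2\<lparr>carrier := H\<rparr>) SL2" "\<forall>h\<in>H. proj_PSL2 (\<phi> h) = h"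
    and h: "h \<in> H"
  shows "\<psi> h = \<phi> h"
proof (rule ccontr)
  assume ne: "\<psi> h \<noteq> \<phi> h"
  have grpH: "group (PSL2\<lparr>carrier := H\<rparr>)" by (rule group.subgroup_imp_group[OF group_PSL2 sub])
  have "\<psi> h \<in> proj_PSL2 (\<psi> h)" by (simp add: proj_eq)
  then have "\<psi> h \<in> proj_PSL2 (\<phi> h)" using \<psi>(2) \<phi>(2) h by simp
  then have e: "\<psi> h = - \<phi> h" using ne by (simp add: proj_eq)
  have gh\<psi>: "group_hom (PSL2\<lparr>carrier := H\<rparr>) SL2 \<psi>"
    using grpH group_SL2 \<psi>(1) by (simp add: group_hom_def group_hom_axioms_def)
  have gh\<phi>: "group_hom (PSL2\<lparr>carrier := H\<rparr>) SL2 \<phi>"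
    using grpH group_SL2 \<phi>(1) by (simp add: group_hom_def group_hom_axioms_def)
  have "\<psi> (h [^]\<^bsub>PSL2\<lparr>carrier := H\<rparr>\<^esub> n) = \<psi> h [^]\<^bsub>SL2\<^esub> n"
    using group_hom.hom_nat_pow[OF gh\<psi>] h by simp
  moreover have "\<phi> (h [^]\<^bsub>PSL2\<lparr>carrier := H\<rparr>\<^esub> n) = \<phi> h [^]\<^bsub>SL2\<^esub> n"
    using group_hom.hom_nat_pow[OF gh\<phi>] h by simp
  moreover have "\<psi> (\<one>\<^bsub>PSL2\<^esub>) = mat 1" "\<phi> (\<one>\<^bsub>PSL2\<^esub>) = mat 1"
    using group_hom.hom_one[OF gh\<psi>] group_hom.hom_one[OF gh\<phi>] by simp_all
  ultimately have "mat 1 = - (mat 1 :: 'k^2^2)"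
    using powH[OF h] e oddn by (simp add: neg_pow_SL2)
  moreover have "(2::'k) \<noteq> 0"
  proof
    assume "(2::'k) = 0"
    then have "- \<phi> h = \<phi> h" using char2_neg[of "\<phi> h"] by simp
    with e ne show False by simp
  qed
  ultimately show False using neg_ne_2[of "mat 1::'k^2^2"] by simp
qed


lemma unique_liftI:
  assumes "\<phi> \<in> hom (PSL2\<lparr>carrier := H\<rparr>) SL2 \<and> (\<forall>h\<in>H. proj_PSL2 (\<phi> h) = h)"
    and "\<And>\<psi> h. \<psi> \<in> hom (PSL2\<lparr>carrier := H\<rparr>) SL2 \<Longrightarrow> \<forall>h\<in>H. proj_PSL2 (\<psi> h) = h \<Longrightarrow> h \<in> H \<Longrightarrow> \<psi> h = \<phi> h"
  shows "unique_lift (H::('k::field^2^2) set set)"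
proof -
  have "\<forall>\<psi>. \<psi> \<in> hom (PSL2\<lparr>carrier := H\<rparr>) SL2 \<and> (\<forall>h\<in>H. proj_PSL2 (\<psi> h) = h) \<longrightarrow> (\<forall>h\<in>H. \<psi> h = \<phi> h)"
  proof (intro allI impI ballI)
    fix \<psi> h assume a: "\<psi> \<in> hom (PSL2\<lparr>carrier := H\<rparr>) SL2 \<and> (\<forall>h\<in>H. proj_PSL2 (\<psi> h) = h)" and h: "h \<in> H"
    from a have "\<psi> \<in> hom (PSL2\<lparr>carrier := H\<rparr>) SL2" "\<forall>h\<in>H. proj_PSL2 (\<psi> h) = h" by simp_all
    from assms(2)[OF this h] show "\<psi> h = \<phi> h" .
  qed
  note X = this
  show ?thesis unfolding unique_lift_def
  proof (rule exI[of _ \<phi>], intro conjI)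
    show "\<phi> \<in> hom (PSL2\<lparr>carrier := H\<rparr>) SL2" using assms(1) by (rule conjunct1)
    show "\<forall>h\<in>H. proj_PSL2 (\<phi> h) = h" using assms(1) by (rule conjunct2)
    show "\<forall>\<psi>. \<psi> \<in> hom (PSL2\<lparr>carrier := H\<rparr>) SL2 \<and> (\<forall>h\<in>H. proj_PSL2 (\<psi> h) = h) \<longrightarrow> (\<forall>h\<in>H. \<psi> h = \<phi> h)"
      by (rule X)
  qed
qed

lemma finite_lift:
  fixes H :: "('k::field^2^2) set set"
  assumes sub: "subgroup H PSL2" and fin: "finite H"
    and tor: "\<forall>g\<in>H. g \<otimes>\<^bsub>PSL2\<^esub> g = \<one>\<^bsub>PSL2\<^esub> \<longrightarrow> g = \<one>\<^bsub>PSL2\<^esub>"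
  shows "unique_lift H"
proof -
  have grpH: "group (PSL2\<lparr>carrier := H\<rparr>)" by (rule group.subgroup_imp_group[OF group_PSL2 sub])
  have Hc: "H \<subseteq> carrier PSL2" using sub by (rule subgroup.subset)
  have oddH: "odd (card H)"
  proof
    assume "even (card H)"
    then obtain m where m: "card H = 2^1 * m" by auto
    from sylow_thm[OF two_is_prime_nat grpH, of 1 m] m fin obtain Q where
      Q: "subgroup Q (PSL2\<lparr>carrier:=H\<rparr>)" "card Q = 2" by (auto simp: order_def)
    have "\<one>\<^bsub>PSL2\<^esub> \<in> Q" using subgroup.one_closed[OF Q(1)] by simp
    then obtain x where x: "x \<in> Q" "x \<noteq> \<one>\<^bsub>PSL2\<^esub>" "Q = {\<one>\<^bsub>PSL2\<^esub>, x}"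
      using Q(2) by (auto simp: card_2_iff)
    have xH: "x \<in> H" using subgroup.subset[OF Q(1)] x by auto
    then have xc: "x \<in> carrier PSL2" using Hc by auto
    have "x \<otimes>\<^bsub>PSL2\<^esub> x \<in> Q" using subgroup.m_closed[OF Q(1) x(1) x(1)] by simp
    moreover have "x \<otimes>\<^bsub>PSL2\<^esub> x \<noteq> x"
    proof
      assume "x \<otimes>\<^bsub>PSL2\<^esub> x = x"
      then have "x = \<one>\<^bsub>PSL2\<^esub>" using group.l_cancel_one[OF group_PSL2 xc xc] by simp
      with x show False by simp
    qed
    ultimately have "x \<otimes>\<^bsub>PSL2\<^esub> x = \<one>\<^bsub>PSL2\<^esub>" using x(3) by auto
    with tor xH x(2) show False by auto
  qed
  show ?thesis
  proof (cases "(2::'k) = 0")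
    case True
    define \<phi> where "\<phi> h = (SOME A. A \<in> h)" for h :: "('k^2^2) set"
    have single: "\<And>h. h \<in> H \<Longrightarrow> h = {\<phi> h}"
    proof -
      fix h assume "h \<in> H"
      then have "h \<in> proj_PSL2 ` carrier SL2" using Hc carrier_PSL2 by auto
      then obtain A where "h = proj_PSL2 A" by (rule imageE)
      moreover have "- A = A" using char2_neg[of A] True by simp
      ultimately have "h = {A}" by (simp add: proj_eq)
      then show "h = {\<phi> h}" by (simp add: \<phi>_def)
    qed
    have "\<phi> \<in> hom (PSL2\<lparr>carrier := H\<rparr>) (SL2::('k::field^2^2) monoid) \<and> (\<forall>h\<in>H. proj_PSL2 (\<phi> h) = h)"
    proof (rule homI2[OF Hc])
      show "\<forall>h\<in>H. \<phi> h \<in> h" using single by (metis singletonI)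
      show "\<forall>h\<in>H. \<forall>k\<in>H. \<phi> (h \<otimes>\<^bsub>PSL2\<^esub> k) = \<phi> h ** \<phi> k"
      proof (intro ballI)
        fix h k assume "h \<in> H" "k \<in> H"
        then have "h \<otimes>\<^bsub>PSL2\<^esub> k = {X ** Y | X Y. X \<in> {\<phi> h} \<and> Y \<in> {\<phi> k}}"
          using single[of h] single[of k] mult_PSL2_set[of h k] by simp
        then have "h \<otimes>\<^bsub>PSL2\<^esub> k = {\<phi> h ** \<phi> k}" by auto
        then show "\<phi> (h \<otimes>\<^bsub>PSL2\<^esub> k) = \<phi> h ** \<phi> k" by (simp add: \<phi>_def)
      qed
    qed
    then show ?thesis
    proof (rule unique_liftI)
      fix \<psi> h assume "\<forall>h\<in>H. proj_PSL2 (\<psi> h) = h" "h \<in> H"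
      then have "\<psi> h \<in> h" by (metis insertI1 proj_eq)
      then show "\<psi> h = \<phi> h" using single[OF \<open>h \<in> H\<close>] by (metis singletonD)
    qed
  next
    case False
    define Hh where "Hh = \<Union>H"
    have HhD: "\<And>A. A \<in> Hh \<Longrightarrow> det A = 1 \<and> proj_PSL2 A \<in> H"
    proof -
      fix A assume "A \<in> Hh"
      then obtain g where g: "g \<in> H" "A \<in> g" unfolding Hh_def by auto
      then have "g \<in> carrier PSL2" using Hc by auto
      from PSL2_elem[OF this g(2)] g(1) show "det A = 1 \<and> proj_PSL2 A \<in> H" by simp
    qed
    have HhI: "\<And>A. det A = 1 \<Longrightarrow> proj_PSL2 A \<in> H \<Longrightarrow> A \<in> Hh"
    proof -
      fix A :: "'k^2^2" assume "proj_PSL2 A \<in> H"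
      moreover have "A \<in> proj_PSL2 A" by (simp add: proj_eq)
      ultimately show "A \<in> Hh" unfolding Hh_def by blast
    qed
    have Hh_mult: "\<And>A X. A \<in> Hh \<Longrightarrow> X \<in> Hh \<Longrightarrow> A ** X \<in> Hh"
    proof -
      fix A X assume "A \<in> Hh" "X \<in> Hh"
      then obtain g k where "A \<in> g" "X \<in> k" "g \<in> H" "k \<in> H" unfolding Hh_def by auto
      then have "A ** X \<in> g \<otimes>\<^bsub>PSL2\<^esub> k" "g \<otimes>\<^bsub>PSL2\<^esub> k \<in> H"
        using subgroup.m_closed[OF sub] by (auto simp: mult_PSL2_set)
      then show "A ** X \<in> Hh" unfolding Hh_def by auto
    qed
    have Hh_adj: "\<And>A. A \<in> Hh \<Longrightarrow> adj2 A \<in> Hh"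
    proof -
      fix A assume "A \<in> Hh"
      then have "det A = 1" "proj_PSL2 A \<in> H" using HhD by auto
      have "inv\<^bsub>PSL2\<^esub> (proj_PSL2 A) \<in> H" by (rule subgroup.m_inv_closed[OF sub \<open>proj_PSL2 A \<in> H\<close>])
      then have "proj_PSL2 (adj2 A) \<in> H" using inv_PSL2[of A] \<open>det A = 1\<close> by simp
      then show "adj2 A \<in> Hh" using HhI \<open>det A = 1\<close> det_adj2 by metis
    qed
    have finHh: "finite Hh" unfolding Hh_def using fin Hc by (auto simp: carrier_PSL2 proj_eq)
    define f where "f A = (\<lambda>X. if X \<in> Hh then A ** X else X)" for A
    define s where "s A = (sign (f A) :: int)" for A
    have f_perm: "\<And>A. A \<in> Hh \<Longrightarrow> permutation (f A)"
    proof -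
      fix A assume A: "A \<in> Hh"
      have inj: "inj_on (\<lambda>X. A ** X) Hh"
      proof (rule inj_onI)
        fix X Y assume "X \<in> Hh" "Y \<in> Hh" "A ** X = A ** Y"
        then have "adj2 A ** (A ** X) = adj2 A ** (A ** Y)" by simp
        moreover have "adj2 A ** A = mat 1" using A HhD adj2_mult by blast
        ultimately show "X = Y" by (simp add: matrix_mul_assoc)
      qed
      have "(\<lambda>X. A ** X) ` Hh = Hh"
        by (rule endo_inj_surj[OF finHh _ inj]) (use A Hh_mult in auto)
      then have "bij_betw (\<lambda>X. A ** X) Hh Hh" using inj by (simp add: bij_betw_def)
      then have "bij_betw (f A) Hh Hh" by (rule bij_betw_cong[THEN iffD1, rotated]) (simp add: f_def)
      then have "f A permutes Hh" by (rule bij_imp_permutes) (simp add: f_def)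
      then show "permutation (f A)" using finHh permutes_imp_permutation by blast
    qed
    have s_mult: "\<And>A B. A \<in> Hh \<Longrightarrow> B \<in> Hh \<Longrightarrow> s (A ** B) = s A * s B"
    proof -
      fix A B assume A: "A \<in> Hh" and B: "B \<in> Hh"
      have "f A \<circ> f B = f (A ** B)"
        using Hh_mult[OF B] by (auto simp: f_def matrix_mul_assoc)
      then show "s (A ** B) = s A * s B" unfolding s_def
        by (metis sign_compose f_perm A B)
    qed
    have s_pm: "\<And>A. s A = 1 \<or> s A = -1" by (simp add: s_def sign_def)
    have negI: "- mat 1 \<in> Hh"
    proof -
      have "- mat 1 \<in> \<one>\<^bsub>PSL2\<^esub>" by (simp add: PSL2_def centre_SL2_def)
      then show ?thesis using subgroup.one_closed[OF sub] unfolding Hh_def by blast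
    qed
    have negHh: "\<And>A. A \<in> Hh \<Longrightarrow> - A \<in> Hh"
      using Hh_mult[OF negI] by (simp add: mult_neg2)
    have cardHh: "card Hh = 2 * card H"
    proof -
      have "card Hh = sum card H" unfolding Hh_def
      proof (rule card_Union_disjoint)
        show "pairwise disjnt H"
        proof (rule pairwiseI)
          fix g k assume "g \<in> H" "k \<in> H" "g \<noteq> k"
          then show "disjnt g k" using Hc PSL2_elem unfolding disjnt_def by blast
        qed
        show "\<And>A. A \<in> H \<Longrightarrow> finite A" using Hc by (auto simp: carrier_PSL2 proj_eq)
      qed
      also have "\<dots> = sum (\<lambda>_. 2) H"
      proof (rule sum.cong[OF refl])
        fix g assume "g \<in> H"
        then obtain A where "det A = 1" "g = {A, -A}" using Hc by (auto simp: carrier_PSL2 proj_eq)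
        then show "card g = 2" using neg_ne_2[OF False] by auto
      qed
      finally show ?thesis by simp
    qed
    have s_neg1: "s (- mat 1) = -1"
    proof -
      have "f (- mat 1) = (\<lambda>X. if X \<in> Hh then - X else X)"
        by (rule ext) (simp add: f_def mult_neg2)
      moreover have "\<forall>X\<in>Hh. - X \<in> Hh \<and> - X \<noteq> X \<and> - (- X) = X"
        using negHh HhD neg_ne_2[OF False] by auto
      ultimately have "s (- mat 1) = (-1) ^ (card Hh div 2)"
        unfolding s_def using sign_invol[OF finHh, of uminus] by simp
      then show ?thesis using cardHh oddH by simp
    qed
    have s_neg: "\<And>A. A \<in> Hh \<Longrightarrow> s (- A) = - s A"
      using s_mult[OF negI] s_neg1 by (simp add: mult_neg2)
    define \<phi> where "\<phi> h = (SOME A. A \<in> h \<and> s A = 1)" for h :: "('k^2^2) set"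
    have \<phi>1: "\<And>h. h \<in> H \<Longrightarrow> \<phi> h \<in> h \<and> s (\<phi> h) = 1"
    proof -
      fix h assume h: "h \<in> H"
      then obtain A where A: "det A = 1" "h = {A, -A}" using Hc by (auto simp: carrier_PSL2 proj_eq)
      then have "A \<in> Hh" using h unfolding Hh_def by auto
      then have "\<exists>B. B \<in> h \<and> s B = 1" using s_neg s_pm A by (metis insertCI minus_equation_iff)
      then show "\<phi> h \<in> h \<and> s (\<phi> h) = 1" unfolding \<phi>_def by (rule someI_ex)
    qed
    have \<phi>2: "\<And>h A. h \<in> H \<Longrightarrow> A \<in> h \<Longrightarrow> s A = 1 \<Longrightarrow> \<phi> h = A"
    proof -
      fix h A assume h: "h \<in> H" and A: "A \<in> h" "s A = 1"
      then have "h = {A, -A}" "A \<in> Hh" using Hc PSL2_elem unfolding Hh_def by (auto simp: proj_eq)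
      with \<phi>1[OF h] A s_neg show "\<phi> h = A" by auto
    qed
    have "\<phi> \<in> hom (PSL2\<lparr>carrier := H\<rparr>) (SL2::('k::field^2^2) monoid) \<and> (\<forall>h\<in>H. proj_PSL2 (\<phi> h) = h)"
    proof (rule homI2[OF Hc])
      show "\<forall>h\<in>H. \<phi> h \<in> h" using \<phi>1 by blast
      show "\<forall>h\<in>H. \<forall>k\<in>H. \<phi> (h \<otimes>\<^bsub>PSL2\<^esub> k) = \<phi> h ** \<phi> k"
      proof (intro ballI)
        fix h k assume h: "h \<in> H" and k: "k \<in> H"
        have "\<phi> h ** \<phi> k \<in> h \<otimes>\<^bsub>PSL2\<^esub> k" using \<phi>1[OF h] \<phi>1[OF k] by (auto simp: mult_PSL2_set)
        moreover have "h \<otimes>\<^bsub>PSL2\<^esub> k \<in> H" using subgroup.m_closed[OF sub h k] .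
        moreover have "s (\<phi> h ** \<phi> k) = 1"
        proof -
          have "\<phi> h \<in> Hh" "\<phi> k \<in> Hh" using \<phi>1[OF h] \<phi>1[OF k] h k unfolding Hh_def by blast+
          then show ?thesis using s_mult \<phi>1[OF h] \<phi>1[OF k] by simp
        qed
        ultimately show "\<phi> (h \<otimes>\<^bsub>PSL2\<^esub> k) = \<phi> h ** \<phi> k" using \<phi>2 by blast
      qed
    qed
    then show ?thesis
    proof (rule unique_liftI)
      fix \<psi> h assume \<psi>h: "\<psi> \<in> hom (PSL2\<lparr>carrier := H\<rparr>) SL2"
        and \<psi>p: "\<forall>h\<in>H. proj_PSL2 (\<psi> h) = h" and h: "h \<in> H"
      have \<psi>in: "\<And>h. h \<in> H \<Longrightarrow> \<psi> h \<in> h" using \<psi>p by (metis insertI1 proj_eq)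
      have \<psi>Hh: "\<And>h. h \<in> H \<Longrightarrow> \<psi> h \<in> Hh" using \<psi>in unfolding Hh_def by auto
      have \<chi>m: "\<And>h k. h \<in> H \<Longrightarrow> k \<in> H \<Longrightarrow> s (\<psi> (h \<otimes>\<^bsub>PSL2\<^esub> k)) = s (\<psi> h) * s (\<psi> k)"
      proof -
        fix h k assume "h \<in> H" "k \<in> H"
        then have "\<psi> (h \<otimes>\<^bsub>PSL2\<^esub> k) = \<psi> h ** \<psi> k" using \<psi>h by (simp add: hom_def)
        then show "s (\<psi> (h \<otimes>\<^bsub>PSL2\<^esub> k)) = s (\<psi> h) * s (\<psi> k)"
          using s_mult \<psi>Hh \<open>h \<in> H\<close> \<open>k \<in> H\<close> by simp
      qed
      have all1: "\<forall>h\<in>H. s (\<psi> h) = 1"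
      proof (rule ccontr)
        assume "\<not> (\<forall>h\<in>H. s (\<psi> h) = 1)"
        then obtain h0 where h0: "h0 \<in> H" "s (\<psi> h0) = -1" using s_pm by metis
        define K where "K = {k\<in>H. s (\<psi> k) = 1}"
        define J where "J = {k\<in>H. s (\<psi> k) = -1}"
        have HKJ: "H = K \<union> J" "K \<inter> J = {}" using s_pm by (auto simp: K_def J_def)
        have inj: "inj_on (\<lambda>k. k \<otimes>\<^bsub>PSL2\<^esub> h0) H"
        proof (rule inj_onI)
          fix x y assume "x \<in> H" "y \<in> H" "x \<otimes>\<^bsub>PSL2\<^esub> h0 = y \<otimes>\<^bsub>PSL2\<^esub> h0"
          then show "x = y" using group.right_cancel[OF group_PSL2, of h0 x y] Hc h0 by auto
        qed
        have i1: "(\<lambda>k. k \<otimes>\<^bsub>PSL2\<^esub> h0) ` K \<subseteq> J"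
          using \<chi>m h0 subgroup.m_closed[OF sub] by (auto simp: K_def J_def)
        have i2: "(\<lambda>k. k \<otimes>\<^bsub>PSL2\<^esub> h0) ` J \<subseteq> K"
          using \<chi>m h0 subgroup.m_closed[OF sub] by (auto simp: K_def J_def)
        have fK: "finite K" "finite J" using fin by (auto simp: K_def J_def)
        have "card K \<le> card J"
          by (rule card_inj_on_le[OF inj_on_subset[OF inj] i1 fK(2)]) (auto simp: K_def)
        moreover have "card J \<le> card K"
          by (rule card_inj_on_le[OF inj_on_subset[OF inj] i2 fK(1)]) (auto simp: J_def)
        ultimately have "card H = 2 * card K" using HKJ fK card_Un_disjoint by (metis mult_2 order_antisym)
        with oddH show False by simp
      qed
      show "\<psi> h = \<phi> h" using \<phi>2[OF h \<psi>in[OF h]] all1 h by simp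
    qed
  qed
qed


definition vge :: "('k::field \<Rightarrow> int) \<Rightarrow> int \<Rightarrow> 'k \<Rightarrow> bool" where
  "vge v a x \<longleftrightarrow> x = 0 \<or> v x \<ge> a"

lemma vge_0[simp]: "vge v a 0" by (simp add: vge_def)

lemma vge_mono: "vge v a x \<Longrightarrow> b \<le> a \<Longrightarrow> vge v b x"
  by (auto simp: vge_def)

context
  fixes v :: "'k::field \<Rightarrow> int"
  assumes dv: "discrete_valuation v"
begin

lemma vmul: "x \<noteq> 0 \<Longrightarrow> y \<noteq> 0 \<Longrightarrow> v (x * y) = v x + v y"
  using dv by (simp add: discrete_valuation_def)

lemma vultra: "x \<noteq> 0 \<Longrightarrow> y \<noteq> 0 \<Longrightarrow> x + y \<noteq> 0 \<Longrightarrow> v (x + y) \<ge> min (v x) (v y)"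
  using dv by (simp add: discrete_valuation_def)

lemma v1: "v 1 = 0"
  using vmul[of 1 1] by simp

lemma vm1: "v (-1) = 0"
  using vmul[of "-1" "-1"] v1 by simp

lemma vneg: "v (- x) = v x"
proof (cases "x = 0")
  case False
  then have "v ((-1) * x) = v (-1) + v x" by (intro vmul) auto
  then show ?thesis using vm1 by simp
qed simp

lemma vge_add: "vge v a x \<Longrightarrow> vge v a y \<Longrightarrow> vge v a (x + y)"
  unfolding vge_def using vultra[of x y] by (cases "x = 0"; cases "y = 0"; cases "x + y = 0") auto

lemma vge_neg: "vge v a x \<Longrightarrow> vge v a (- x)"
  unfolding vge_def using vneg[of x] by auto

lemma vge_diff: "vge v a x \<Longrightarrow> vge v a y \<Longrightarrow> vge v a (x - y)"
  using vge_add[of a x "- y"] vge_neg[of a y] by simp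

lemma vge_mult: "vge v a x \<Longrightarrow> vge v b y \<Longrightarrow> vge v (a + b) (x * y)"
  unfolding vge_def by (cases "x = 0"; cases "y = 0") (auto simp: vmul)

lemma vge_mult_iff: "x \<noteq> 0 \<Longrightarrow> vge v (a + v x) (x * y) \<longleftrightarrow> vge v a y"
  unfolding vge_def by (cases "y = 0") (auto simp: vmul)

lemma vpow: "p \<noteq> 0 \<Longrightarrow> v p = 1 \<Longrightarrow> v (p ^ n) = int n"
proof (induction n)
  case 0 then show ?case using v1 by simp
next
  case (Suc n)
  then have "v (p ^ Suc n) = v p + v (p ^ n)" by (simp add: vmul)
  then show ?case using Suc by simp
qed

lemma residues:
  assumes fr: "finite_residue_field v"
  shows "\<exists>R. finite R \<and> (\<forall>r\<in>R. vge v 0 r) \<and> (\<forall>x. vge v 0 x \<longrightarrow> (\<exists>r\<in>R. vge v (int N) (x - r)))"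
proof (induction N)
  case 0
  show ?case by (intro exI[of _ "{0}"]) (auto simp: vge_def)
next
  case (Suc N)
  from Suc obtain R where R: "finite R" "\<forall>r\<in>R. vge v 0 r" "\<forall>x. vge v 0 x \<longrightarrow> (\<exists>r\<in>R. vge v (int N) (x - r))"
    by blast
  from fr obtain R1 where R1: "finite R1" "R1 \<subseteq> val_ring v" "\<forall>x\<in>val_ring v. \<exists>r\<in>R1. vclose v 1 x r"
    by (auto simp: finite_residue_field_def)
  have vr: "\<And>x. x \<in> val_ring v \<longleftrightarrow> vge v 0 x" by (auto simp: val_ring_def vge_def)
  have vc: "\<And>x y N. vclose v N x y \<longleftrightarrow> vge v N (x - y)" by (auto simp: vclose_def vge_def)
  from dv obtain p where p: "p \<noteq> 0" "v p = 1" by (auto simp: discrete_valuation_def)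
  have vpN: "v (p ^ N) = int N" by (rule vpow[OF p])
  have pN0: "p ^ N \<noteq> 0" using p by simp
  define R' where "R' = (\<lambda>(r, s). r + p ^ N * s) ` (R \<times> R1)"
  show ?case
  proof (intro exI[of _ R'] conjI ballI allI impI)
    show "finite R'" unfolding R'_def using R(1) R1(1) by simp
  next
    fix r' assume "r' \<in> R'"
    then obtain r s where "r \<in> R" "s \<in> R1" "r' = r + p ^ N * s" unfolding R'_def by auto
    moreover have "vge v 0 (p ^ N * s)"
      using vge_mult[of "int N" "p ^ N" 0 s] \<open>s \<in> R1\<close> R1(2) vr vpN by (auto simp: vge_def)
    ultimately show "vge v 0 r'" using R(2) vge_add by auto
  next
    fix x assume x: "vge v 0 x"
    then obtain r where r: "r \<in> R" "vge v (int N) (x - r)" using R(3) by blast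
    define y where "y = (x - r) / p ^ N"
    have xy: "x - r = p ^ N * y" using pN0 by (simp add: y_def)
    have "vge v (0 + v (p ^ N)) (p ^ N * y)" using r(2) xy vpN by simp
    then have y0: "vge v 0 y" using vge_mult_iff[OF pN0] by blast
    then obtain s where s: "s \<in> R1" "vge v 1 (y - s)" using R1(3) vr vc by blast
    have "x - (r + p ^ N * s) = p ^ N * (y - s)" using xy by (simp add: algebra_simps)
    moreover have "vge v (int N + 1) (p ^ N * (y - s))"
      using vge_mult[of "int N" "p ^ N" 1 "y - s"] s(2) vpN by (simp add: vge_def)
    ultimately have "vge v (int (Suc N)) (x - (r + p ^ N * s))" by (simp add: add.commute)
    moreover have "r + p ^ N * s \<in> R'" unfolding R'_def using r(1) s(1) by force
    ultimately show "\<exists>r\<in>R'. vge v (int (Suc N)) (x - r)" by blast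
  qed
qed

end


definition bnd :: "('k::field \<Rightarrow> int) \<Rightarrow> int \<Rightarrow> 'k^2^2 \<Rightarrow> bool" where
  "bnd v a X \<longleftrightarrow> (\<forall>i j. vge v a (X$i$j))"

lemma bnd_iff: "bnd v a X \<longleftrightarrow> vge v a (X$1$1) \<and> vge v a (X$1$2) \<and> vge v a (X$2$1) \<and> vge v a (X$2$2)"
  unfolding bnd_def by (auto simp: forall_2)

lemma bnd_mono: "bnd v a X \<Longrightarrow> b \<le> a \<Longrightarrow> bnd v b X"
  unfolding bnd_def using vge_mono by blast

lemma bnd_exists: "\<exists>a. bnd v a X"
proof -
  define a where "a = - (\<bar>v (X$1$1)\<bar> + \<bar>v (X$1$2)\<bar> + \<bar>v (X$2$1)\<bar> + \<bar>v (X$2$2)\<bar>)"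
  have "bnd v a X" unfolding bnd_iff vge_def a_def by auto
  then show ?thesis by blast
qed

definition L0 :: "('k::field \<Rightarrow> int) \<Rightarrow> ('k^2) set" where
  "L0 v = {w. vge v 0 (w$1) \<and> vge v 0 (w$2)}"

definition inv2 :: "'k::field^2^2 \<Rightarrow> 'k^2^2" where
  "inv2 X = (\<chi> i j. inverse (det X) * adj2 X $ i $ j)"

lemma inv2:
  assumes "det X \<noteq> 0"
  shows "X ** inv2 X = mat 1 \<and> inv2 X ** X = mat 1"
proof -
  define i where "i = inverse (det X)"
  have k: "i * (X$1$1 * X$2$2 - X$1$2 * X$2$1) = 1" using assms by (simp add: i_def det_2)
  have "X$1$1 * (i * X$2$2) + X$1$2 * (i * - X$2$1) = i * (X$1$1 * X$2$2 - X$1$2 * X$2$1)"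
    "X$2$1 * (i * - X$1$2) + X$2$2 * (i * X$1$1) = i * (X$1$1 * X$2$2 - X$1$2 * X$2$1)"
    "i * X$2$2 * X$1$1 + i * - X$1$2 * X$2$1 = i * (X$1$1 * X$2$2 - X$1$2 * X$2$1)"
    "i * - X$2$1 * X$1$2 + i * X$1$1 * X$2$2 = i * (X$1$1 * X$2$2 - X$1$2 * X$2$1)"
    by (simp_all add: algebra_simps)
  with k show ?thesis
    by (simp add: inv2_def mat_eq2 mm2 adj2_c mat1_2 i_def[symmetric] algebra_simps)
qed

lemma lattice_std:
  assumes "lattice v L"
  shows "\<exists>P. det P \<noteq> 0 \<and> L = (\<lambda>w. P *v w) ` L0 v"
proof -
  from assms obtain x y where xy: "x $ 1 * y $ 2 - x $ 2 * y $ 1 \<noteq> 0"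
    "L = {a *s x + b *s y | a b. a \<in> val_ring v \<and> b \<in> val_ring v}"
    unfolding lattice_def by blast
  define P :: "'a^2^2" where "P = (\<chi> i j. if j = 1 then x$i else y$i)"
  have dP: "det P \<noteq> 0" using xy(1) by (simp add: P_def det_2 mult.commute)
  have Pv: "\<And>w. P *v w = w$1 *s x + w$2 *s y"
    by (simp add: vec_eq2 mv2 P_def mult.commute)
  have vr: "\<And>x. x \<in> val_ring v \<longleftrightarrow> vge v 0 x" by (auto simp: val_ring_def vge_def)
  have "L = (\<lambda>w. P *v w) ` L0 v"
  proof
    show "L \<subseteq> (\<lambda>w. P *v w) ` L0 v"
    proof
      fix z assume "z \<in> L"
      then obtain a b where ab: "a \<in> val_ring v" "b \<in> val_ring v" "z = a *s x + b *s y" using xy(2) by blast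
      define w :: "'a^2" where "w = (\<chi> i. if i = 1 then a else b)"
      have "w \<in> L0 v" "z = P *v w" using ab vr by (simp_all add: L0_def w_def Pv)
      then show "z \<in> (\<lambda>w. P *v w) ` L0 v" by blast
    qed
  next
    show "(\<lambda>w. P *v w) ` L0 v \<subseteq> L"
    proof
      fix z assume "z \<in> (\<lambda>w. P *v w) ` L0 v"
      then obtain w where "w \<in> L0 v" "z = P *v w" by blast
      then show "z \<in> L" using xy(2) vr by (auto simp: L0_def Pv)
    qed
  qed
  with dP show ?thesis by blast
qed

context
  fixes v :: "'k::field \<Rightarrow> int"
  assumes dv: "discrete_valuation v"
begin

lemma bnd_mult: "bnd v a X \<Longrightarrow> bnd v b Y \<Longrightarrow> bnd v (a + b) (X ** Y)"
  unfolding bnd_def mm2 by (intro allI vge_add[OF dv] vge_mult[OF dv]) auto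

lemma bnd_adj2: "bnd v a X \<Longrightarrow> bnd v a (adj2 X)"
  unfolding bnd_iff adj2_c using vge_neg[OF dv] by simp

lemma bnd_diff: "bnd v a X \<Longrightarrow> bnd v a Y \<Longrightarrow> bnd v a (X - Y)"
  unfolding bnd_def using vge_diff[OF dv] by simp

lemma entries_bound:
  fixes M :: "'k^2^2"
  assumes dM: "det M = \<delta>" and d0: "\<delta> \<noteq> 0" and c0: "c \<noteq> 0"
    and fw: "\<forall>w\<in>L0 v. \<exists>u\<in>L0 v. M *v w = c *s u"
    and bw: "\<forall>u\<in>L0 v. \<exists>w\<in>L0 v. c *s u = M *v w"
  shows "bnd v (- \<bar>v \<delta>\<bar>) M"
proof -
  define e1 :: "'k^2" where "e1 = (\<chi> i. if i = 1 then 1 else 0)"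
  define e2 :: "'k^2" where "e2 = (\<chi> i. if i = 1 then 0 else 1)"
  have v1': "vge v 0 1" using v1[OF dv] by (simp add: vge_def)
  have e: "e1 \<in> L0 v" "e2 \<in> L0 v" using v1' by (simp_all add: L0_def e1_def e2_def)
  obtain u1 where u1: "u1 \<in> L0 v" "M *v e1 = c *s u1" using fw e by blast
  obtain u2 where u2: "u2 \<in> L0 v" "M *v e2 = c *s u2" using fw e by blast
  obtain a where a: "a \<in> L0 v" "c *s e1 = M *v a" using bw e by blast
  obtain b where b: "b \<in> L0 v" "c *s e2 = M *v b" using bw e by blast
  have Mc: "M$1$1 = c * u1$1" "M$2$1 = c * u1$2" "M$1$2 = c * u2$1" "M$2$2 = c * u2$2"
    using u1(2) u2(2) by (simp_all add: vec_eq2 mv2 e1_def e2_def)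
  have ea: "c = M$1$1 * a$1 + M$1$2 * a$2" "0 = M$2$1 * a$1 + M$2$2 * a$2"
    using a(2) by (simp_all add: vec_eq2 mv2 e1_def)
  have eb: "0 = M$1$1 * b$1 + M$1$2 * b$2" "c = M$2$1 * b$1 + M$2$2 * b$2"
    using b(2) by (simp_all add: vec_eq2 mv2 e2_def)
  define D where "D = a$1 * b$2 - a$2 * b$1"
  have "c * c = (M$1$1 * a$1 + M$1$2 * a$2) * (M$2$1 * b$1 + M$2$2 * b$2)
      - (M$2$1 * a$1 + M$2$2 * a$2) * (M$1$1 * b$1 + M$1$2 * b$2)"
    using ea eb by simp
  also have "\<dots> = \<delta> * D" unfolding D_def dM[symmetric] det_2 by (simp add: algebra_simps)
  finally have ccD: "c * c = \<delta> * D" .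
  have D0: "D \<noteq> 0" using ccD c0 by auto
  have vD: "vge v 0 D" unfolding D_def
    using a(1) b(1) vge_diff[OF dv] vge_mult[OF dv, of 0 _ 0] by (simp add: L0_def)
  have "v c + v c = v \<delta> + v D" using ccD vmul[OF dv] c0 d0 D0 by metis
  moreover have "v D \<ge> 0" using vD D0 by (simp add: vge_def)
  ultimately have vc: "v c \<ge> - \<bar>v \<delta>\<bar>" by linarith
  have vcc: "vge v (v c) c" by (simp add: vge_def)
  have "\<And>u. vge v 0 u \<Longrightarrow> vge v (- \<bar>v \<delta>\<bar>) (c * u)"
    using vge_mult[OF dv vcc] vge_mono vc by (metis add.right_neutral)
  then show ?thesis unfolding bnd_iff Mc using u1(1) u2(1) by (simp add: L0_def)
qed

end


lemma act_vertex_mult: "act_vertex (A ** B) V = act_vertex A (act_vertex B V)"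
  unfolding act_vertex_def image_image by (simp add: matrix_vector_mul_assoc)

lemma act_vertex_one: "act_vertex (mat 1) V = V"
  unfolding act_vertex_def by simp

lemma negmat_scale: "(- mat 1) *v (c *s (x::'k::field^2)) = (- c) *s x"
  by (simp add: vec_eq2 mv2 mat1_2)

lemma BT_vertex_repr: "BT_vertex v V \<Longrightarrow> \<exists>L. lattice v L \<and> V = {(\<lambda>x. c *s x) ` L | c. c \<noteq> 0}"
  unfolding BT_vertex_def by blast

lemma act_vertex_neg:
  assumes "BT_vertex v (V::('k::field^2) set set)"
  shows "act_vertex (- mat 1) V = V"
proof -
  obtain L where V: "V = {(\<lambda>x. c *s x) ` L | c. c \<noteq> 0}" using BT_vertex_repr[OF assms] by blast
  have e: "\<And>c. (\<lambda>x. (- mat 1) *v x) ` ((\<lambda>x. c *s x) ` L) = (\<lambda>x. (- c) *s x) ` L"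
    unfolding image_image negmat_scale by simp
  have "act_vertex (- mat 1) V = {(\<lambda>x. (- c) *s x) ` L | c. c \<noteq> 0}"
    unfolding act_vertex_def V e[symmetric] by blast
  also have "\<dots> = V" unfolding V
  proof (intro equalityI subsetI)
    fix S assume "S \<in> {(\<lambda>x. (- c) *s x) ` L | c. c \<noteq> 0}"
    then obtain c where "c \<noteq> 0" "S = (\<lambda>x. (- c) *s x) ` L" by blast
    then show "S \<in> {(\<lambda>x. c *s x) ` L | c. c \<noteq> 0}" by (intro CollectI exI[of _ "- c"]) simp
  next
    fix S assume "S \<in> {(\<lambda>x. c *s x) ` L | c. c \<noteq> 0}"
    then obtain c where "c \<noteq> 0" "S = (\<lambda>x. c *s x) ` L" by blast
    then show "S \<in> {(\<lambda>x. (- c) *s x) ` L | c. c \<noteq> 0}" by (intro CollectI exI[of _ "- c"]) simp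
  qed
  finally show ?thesis .
qed

lemma act_edge_mult: "act_edge (A ** B) e = act_edge A (act_edge B e)"
  unfolding act_edge_def image_image act_vertex_mult by simp

lemma act_edge_one: "act_edge (mat 1) e = e"
  unfolding act_edge_def act_vertex_one by simp

lemma act_edge_neg:
  assumes "\<forall>V\<in>e. BT_vertex v (V::('k::field^2) set set)"
  shows "act_edge (- mat 1) e = e"
proof -
  have "\<forall>V\<in>e. act_vertex (- mat 1) V = V" using act_vertex_neg assms by blast
  then have "act_vertex (- mat 1) ` e = id ` e" by (intro image_cong) auto
  then show ?thesis unfolding act_edge_def by simp
qed

lemma adj2_neg: "adj2 (- A) = - adj2 (A::'k::comm_ring_1^2^2)"
  by (simp add: mat_eq2 adj2_c)

lemma stab_subgroup:
  fixes \<alpha> :: "'k::field^2^2 \<Rightarrow> 'x \<Rightarrow> 'x"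
  assumes sub: "subgroup G PSL2"
    and comp: "\<And>A B y. \<alpha> (A ** B) y = \<alpha> A (\<alpha> B y)"
    and one: "\<alpha> (mat 1) x0 = x0" and neg: "\<alpha> (- mat 1) x0 = x0"
  shows "subgroup {g\<in>G. \<forall>A\<in>g. \<alpha> A x0 = x0} PSL2"
proof
  have Gc: "G \<subseteq> carrier PSL2" using sub by (rule subgroup.subset)
  show "{g\<in>G. \<forall>A\<in>g. \<alpha> A x0 = x0} \<subseteq> carrier PSL2" using Gc by auto
next
  fix g h assume g: "g \<in> {g\<in>G. \<forall>A\<in>g. \<alpha> A x0 = x0}" and h: "h \<in> {g\<in>G. \<forall>A\<in>g. \<alpha> A x0 = x0}"
  have "g \<otimes>\<^bsub>PSL2\<^esub> h \<in> G" using g h subgroup.m_closed[OF sub] by auto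
  moreover have "\<forall>X\<in>g \<otimes>\<^bsub>PSL2\<^esub> h. \<alpha> X x0 = x0"
  proof
    fix X assume "X \<in> g \<otimes>\<^bsub>PSL2\<^esub> h"
    then obtain A B where "X = A ** B" "A \<in> g" "B \<in> h" by (auto simp: mult_PSL2_set)
    then show "\<alpha> X x0 = x0" using g h comp by auto
  qed
  ultimately show "g \<otimes>\<^bsub>PSL2\<^esub> h \<in> {g\<in>G. \<forall>A\<in>g. \<alpha> A x0 = x0}" by blast
next
  have "\<one>\<^bsub>PSL2\<^esub> = {mat 1, - mat 1 :: 'k^2^2}" by (simp add: PSL2_def centre_SL2_def)
  then show "\<one>\<^bsub>PSL2\<^esub> \<in> {g\<in>G. \<forall>A\<in>g. \<alpha> A x0 = x0}"
    using subgroup.one_closed[OF sub] one neg by auto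
next
  fix g assume g: "g \<in> {g\<in>G. \<forall>A\<in>g. \<alpha> A x0 = x0}"
  have Gc: "G \<subseteq> carrier PSL2" using sub by (rule subgroup.subset)
  then have gc: "g \<in> carrier PSL2" using g by auto
  then obtain A where A: "det A = 1" "g = proj_PSL2 A" by (auto simp: carrier_PSL2)
  have inv_g: "inv\<^bsub>PSL2\<^esub> g = {adj2 A, - adj2 A}" using A inv_PSL2 by (simp add: proj_eq)
  have key: "\<And>B. B \<in> g \<Longrightarrow> \<alpha> (adj2 B) x0 = x0"
  proof -
    fix B assume B: "B \<in> g"
    then have "det B = 1" using A by (auto simp: proj_eq det_neg2)
    then have "adj2 B ** B = mat 1" using adj2_mult by blast
    then have "\<alpha> (adj2 B) (\<alpha> B x0) = x0" using comp one by metis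
    then show "\<alpha> (adj2 B) x0 = x0" using g B by auto
  qed
  have "A \<in> g" "- A \<in> g" using A by (auto simp: proj_eq)
  then have "\<forall>X\<in>inv\<^bsub>PSL2\<^esub> g. \<alpha> X x0 = x0" using inv_g key adj2_neg by (metis insert_iff singletonD)
  moreover have "inv\<^bsub>PSL2\<^esub> g \<in> G" using g subgroup.m_inv_closed[OF sub] by auto
  ultimately show "inv\<^bsub>PSL2\<^esub> g \<in> {g\<in>G. \<forall>A\<in>g. \<alpha> A x0 = x0}" by blast
qed


lemma mv_smult: "(T::'k::field^2^2) *v (c *s y) = c *s (T *v y)"
  by (simp add: vec_eq2 mv2 algebra_simps)

lemma smult_one_img: "(\<lambda>x. (1::'k::field) *s x) ` (L::('k^2) set) = L"
  by simp

lemma mat_sub_ldist: "(X::'k::field^2^2) ** ((Y::'k^2^2) - Z) = X ** Y - X ** Z"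
  unfolding mat_eq2 by (simp add: mm2 algebra_simps)

lemma mat_sub_rdist: "((Y::'k::field^2^2) - Z) ** (X::'k^2^2) = Y ** X - Z ** X"
  unfolding mat_eq2 by (simp add: mm2 algebra_simps)

lemma transporter_finite:
  fixes v :: "'k::field \<Rightarrow> int" and G :: "('k^2^2) set set"
  assumes nl: "nonarch_local_field v" and sub: "subgroup G PSL2" and disc: "discrete_PSL2 v G"
    and V: "BT_vertex v V" and W: "BT_vertex v W"
  shows "finite {g\<in>G. \<exists>A\<in>g. act_vertex A V = W}"
proof -
  have dv: "discrete_valuation v" and fr: "finite_residue_field v"
    using nl by (auto simp: nonarch_local_field_def)
  have Gc: "G \<subseteq> carrier PSL2" using sub by (rule subgroup.subset)
  obtain L where L: "lattice v L" "V = {(\<lambda>x. c *s x) ` L | c. c \<noteq> 0}" using BT_vertex_repr[OF V] by blast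
  obtain L' where L': "lattice v L'" "W = {(\<lambda>x. c *s x) ` L' | c. c \<noteq> 0}" using BT_vertex_repr[OF W] by blast
  obtain P where P: "det P \<noteq> 0" "L = (\<lambda>w. P *v w) ` L0 v" using lattice_std[OF L(1)] by blast
  obtain P' where P': "det P' \<noteq> 0" "L' = (\<lambda>w. P' *v w) ` L0 v" using lattice_std[OF L'(1)] by blast
  define T where "T = inv2 P"
  define T' where "T' = inv2 P'"
  have PT: "P ** T = mat 1" "T ** P = mat 1" using inv2[OF P(1)] by (simp_all add: T_def)
  have PT': "P' ** T' = mat 1" "T' ** P' = mat 1" using inv2[OF P'(1)] by (simp_all add: T'_def)
  define \<delta> where "\<delta> = det (T' ** P)"
  have "det T' * det P' = 1" using PT'(2) det_mul[of T' P'] by simp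
  then have dT': "det T' \<noteq> 0" by auto
  have d0: "\<delta> \<noteq> 0" unfolding \<delta>_def det_mul using dT' P(1) by simp
  define K where "K = nat \<bar>v \<delta>\<bar>"
  have Kint: "int K = \<bar>v \<delta>\<bar>" by (simp add: K_def)
  obtain p where p: "p \<noteq> 0" "v p = 1" using dv by (auto simp: discrete_valuation_def)
  have pK0: "p ^ K \<noteq> 0" using p by simp
  have vpK: "v (p ^ K) = int K" by (rule vpow[OF dv p])
  obtain N0 where N0: "\<forall>A\<in>\<Union>G. (\<forall>i j. vclose v N0 (A$i$j) (mat 1 $ i $ j)) \<longrightarrow> A \<in> centre_SL2"
    using disc by (auto simp: discrete_PSL2_def)
  obtain cP' where cP': "bnd v cP' P'" using bnd_exists by blast
  obtain cT where cT: "bnd v cT T" using bnd_exists by blast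
  define bA where "bA = cP' - int K + cT"
  define N where "N = nat (N0 - bA - cP' + int K - cT)"
  have "int N \<ge> N0 - bA - cP' + int K - cT" unfolding N_def by simp
  then have Nge: "bA + (cP' + (int N - int K) + cT) \<ge> N0" by linarith
  obtain R where R: "finite R" "\<forall>r\<in>R. vge v 0 r" "\<forall>x. vge v 0 x \<longrightarrow> (\<exists>r\<in>R. vge v (int N) (x - r))"
    using residues[OF dv fr, of N] by (elim exE conjE) simp
  define S where "S = {g\<in>G. \<exists>A\<in>g. act_vertex A V = W}"
  define rep where "rep g = (SOME A. A \<in> g \<and> act_vertex A V = W)" for g :: "('k^2^2) set"
  define M where "M g = T' ** rep g ** P" for g
  have rep: "\<And>g. g \<in> S \<Longrightarrow> rep g \<in> g \<and> act_vertex (rep g) V = W"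
  proof -
    fix g assume "g \<in> S"
    then have "\<exists>A. A \<in> g \<and> act_vertex A V = W" unfolding S_def by blast
    then show "rep g \<in> g \<and> act_vertex (rep g) V = W" unfolding rep_def by (rule someI_ex)
  qed
  have repG: "\<And>g. g \<in> S \<Longrightarrow> det (rep g) = 1 \<and> g = proj_PSL2 (rep g) \<and> g \<in> G"
  proof -
    fix g assume g: "g \<in> S"
    then have "g \<in> carrier PSL2" "g \<in> G" using Gc unfolding S_def by auto
    then show "det (rep g) = 1 \<and> g = proj_PSL2 (rep g) \<and> g \<in> G" using PSL2_elem rep[OF g] by blast
  qed
  have Mb: "\<And>g. g \<in> S \<Longrightarrow> bnd v (- int K) (M g)"
  proof -
    fix g assume g: "g \<in> S"
    define A where "A = rep g"
    have A: "act_vertex A V = W" "det A = 1" using rep[OF g] repG[OF g] by (simp_all add: A_def)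
    have "L \<in> V" unfolding L(2) by (intro CollectI exI[of _ 1]) simp
    then have "(\<lambda>x. A *v x) ` L \<in> W" using A(1) unfolding act_vertex_def by blast
    then obtain c where c: "c \<noteq> 0" "(\<lambda>x. A *v x) ` L = (\<lambda>x. c *s x) ` L'" using L'(2) by blast
    have Mv: "\<And>w. M g *v w = T' *v (A *v (P *v w))"
      by (simp add: M_def A_def matrix_vector_mul_assoc matrix_mul_assoc)
    have T'P': "\<And>u. T' *v (P' *v u) = u" using PT'(2) by (simp add: matrix_vector_mul_assoc)
    have fw: "\<forall>w\<in>L0 v. \<exists>u\<in>L0 v. M g *v w = c *s u"
    proof
      fix w assume w: "w \<in> L0 v"
      have "A *v (P *v w) \<in> (\<lambda>x. A *v x) ` L" using w P(2) by blast
      then have "A *v (P *v w) \<in> (\<lambda>x. c *s x) ` L'" using c(2) by simp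
      then obtain z where z: "z \<in> L'" "A *v (P *v w) = c *s z" by blast
      then obtain u where u0: "u \<in> L0 v" "z = P' *v u" using P'(2) by blast
      then have u: "u \<in> L0 v" "A *v (P *v w) = c *s (P' *v u)" using z by simp_all
      then have "M g *v w = c *s u" using Mv T'P' by (simp add: mv_smult)
      then show "\<exists>u\<in>L0 v. M g *v w = c *s u" using u(1) by blast
    qed
    have bw: "\<forall>u\<in>L0 v. \<exists>w\<in>L0 v. c *s u = M g *v w"
    proof
      fix u assume u: "u \<in> L0 v"
      have "c *s (P' *v u) \<in> (\<lambda>x. c *s x) ` L'" using u P'(2) by blast
      then have "c *s (P' *v u) \<in> (\<lambda>x. A *v x) ` L" using c(2) by simp
      then obtain z where z: "z \<in> L" "c *s (P' *v u) = A *v z" by blast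
      then obtain w where w0: "w \<in> L0 v" "z = P *v w" using P(2) by blast
      then have w: "w \<in> L0 v" "c *s (P' *v u) = A *v (P *v w)" using z by simp_all
      then have "c *s u = M g *v w" using Mv T'P' by (metis mv_smult)
      then show "\<exists>w\<in>L0 v. c *s u = M g *v w" using w(1) by blast
    qed
    have dM: "det (M g) = \<delta>" unfolding M_def \<delta>_def det_mul using A(2) by (simp add: A_def)
    show "bnd v (- int K) (M g)" using entries_bound[OF dv dM d0 c(1) fw bw] Kint by simp
  qed
  have repM: "\<And>g. rep g = P' ** M g ** T"
  proof -
    fix g
    have "P' ** M g ** T = (P' ** T') ** rep g ** (P ** T)" by (simp add: M_def matrix_mul_assoc)
    then show "rep g = P' ** M g ** T" using PT PT' by simp
  qed
  have Ab: "\<And>g. g \<in> S \<Longrightarrow> bnd v bA (rep g)"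
  proof -
    fix g assume g: "g \<in> S"
    have "bnd v (cP' + - int K) (P' ** M g)" by (rule bnd_mult[OF dv cP' Mb[OF g]])
    then have "bnd v (cP' + - int K + cT) (P' ** M g ** T)" by (rule bnd_mult[OF dv _ cT])
    then show "bnd v bA (rep g)" unfolding bA_def repM[of g] by simp
  qed
  define r where "r g i j = (SOME r. r \<in> R \<and> vge v (int N) (p ^ K * M g $ i $ j - r))" for g i j
  have rprop: "\<And>g i j. g \<in> S \<Longrightarrow> r g i j \<in> R \<and> vge v (int N) (p ^ K * M g $ i $ j - r g i j)"
  proof -
    fix g i j assume g: "g \<in> S"
    have "vge v (- int K) (M g $ i $ j)" using Mb[OF g] by (simp add: bnd_def)
    moreover have "vge v (int K) (p ^ K)" using vpK by (simp add: vge_def)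
    ultimately have "vge v (int K + - int K) (p ^ K * M g $ i $ j)"
      using vge_mult[OF dv] by blast
    then have "vge v 0 (p ^ K * M g $ i $ j)" by simp
    then have "\<exists>r. r \<in> R \<and> vge v (int N) (p ^ K * M g $ i $ j - r)" using R(3) by blast
    then show "r g i j \<in> R \<and> vge v (int N) (p ^ K * M g $ i $ j - r g i j)" unfolding r_def by (rule someI_ex)
  qed
  define F where "F g = (r g 1 1, r g 1 2, r g 2 1, r g 2 2)" for g
  have FS: "F ` S \<subseteq> R \<times> R \<times> R \<times> R" using rprop by (auto simp: F_def)
  have inj: "inj_on F S"
  proof (rule inj_onI)
    fix g g' assume g: "g \<in> S" and g': "g' \<in> S" and Fe: "F g = F g'"
    define D where "D = M g - M g'"
    have ent: "\<And>i j. r g i j = r g' i j \<Longrightarrow> vge v (int N - int K) (D $ i $ j)"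
    proof -
      fix i j assume e: "r g i j = r g' i j"
      have "vge v (int N) ((p ^ K * M g $ i $ j - r g i j) - (p ^ K * M g' $ i $ j - r g' i j))"
        using rprop[OF g, of i j] rprop[OF g', of i j] vge_diff[OF dv] by blast
      then have "vge v ((int N - int K) + v (p ^ K)) (p ^ K * D $ i $ j)"
        using e vpK by (simp add: D_def algebra_simps)
      then show "vge v (int N - int K) (D $ i $ j)" using vge_mult_iff[OF dv pK0] by blast
    qed
    have bD: "bnd v (int N - int K) D" unfolding bnd_iff using Fe ent by (simp add: F_def)
    define A where "A = rep g"
    define A' where "A' = rep g'"
    have dA': "det A' = 1" using repG[OF g'] by (simp add: A'_def)
    define X where "X = adj2 A' ** A"
    have AA': "A - A' = P' ** D ** T" unfolding A_def A'_def repM D_def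
      by (simp add: mat_sub_ldist mat_sub_rdist)
    have "X - mat 1 = adj2 A' ** (A - A')"
      using adj2_mult[OF dA'] by (simp add: X_def mat_sub_ldist)
    also have "\<dots> = adj2 A' ** (P' ** D ** T)" by (simp add: AA')
    finally have XD: "X - mat 1 = adj2 A' ** (P' ** D ** T)" .
    have b1: "bnd v bA (adj2 A')" using bnd_adj2[OF dv Ab[OF g']] by (simp add: A'_def)
    have b2: "bnd v (cP' + (int N - int K)) (P' ** D)" by (rule bnd_mult[OF dv cP' bD])
    have b3: "bnd v (cP' + (int N - int K) + cT) (P' ** D ** T)" by (rule bnd_mult[OF dv b2 cT])
    have "bnd v (bA + (cP' + (int N - int K) + cT)) (X - mat 1)" unfolding XD
      by (rule bnd_mult[OF dv b1 b3])
    then have "bnd v N0 (X - mat 1)" using Nge bnd_mono by blast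
    then have close: "\<forall>i j. vclose v N0 (X$i$j) (mat 1 $ i $ j)"
      by (auto simp: bnd_def vclose_def vge_def)
    have XG: "X \<in> \<Union>G"
    proof -
      have gG: "g \<in> G" "g' \<in> G" using repG g g' by auto
      have g'eq: "g' = proj_PSL2 A'" using repG[OF g'] by (simp add: A'_def)
      have "inv\<^bsub>PSL2\<^esub> g' = proj_PSL2 (adj2 A')" unfolding g'eq by (rule inv_PSL2) (simp add: dA')
      moreover have "inv\<^bsub>PSL2\<^esub> g' \<otimes>\<^bsub>PSL2\<^esub> g \<in> G"
        using gG subgroup.m_closed[OF sub] subgroup.m_inv_closed[OF sub] by blast
      moreover have "X \<in> proj_PSL2 (adj2 A') \<otimes>\<^bsub>PSL2\<^esub> g"
        using rep[OF g] unfolding mult_PSL2_set X_def A_def by (auto simp: proj_eq)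
      ultimately show ?thesis by auto
    qed
    have "X \<in> centre_SL2" using N0 XG close by blast
    moreover have "A' ** X = A" using adj2_mult[OF dA'] by (simp add: X_def matrix_mul_assoc)
    ultimately have "A = A' \<or> A = - A'" by (auto simp: centre_SL2_def mult_neg2)
    then have "proj_PSL2 A = proj_PSL2 A'" by (auto simp: proj_eq)
    then show "g = g'" using repG[OF g] repG[OF g'] by (simp add: A_def A'_def)
  qed
  have "finite (F ` S)" using FS R(1) finite_subset by blast
  then have "finite S" using inj finite_imageD by blast
  then show ?thesis unfolding S_def .
qed


lemma PSL2_nonempty: "g \<in> carrier PSL2 \<Longrightarrow> \<exists>A. A \<in> (g::('k::field^2^2) set)"
  by (auto simp: carrier_PSL2 proj_eq)

theorem lemma3p1:
  fixes v :: "'k::field \<Rightarrow> int"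
    and G :: "('k ^2^2) set set"
  assumes "nonarch_local_field v"
    and "subgroup G PSL2"
    and "discrete_PSL2 v G"
    and "no_2_torsion G"
  shows "(\<forall>V. BT_vertex v V \<longrightarrow> unique_lift (stab_vertex G V)) \<and>
         (\<forall>e. BT_edge v e \<longrightarrow> unique_lift (stab_edge G e))"
proof -
  note nl = assms(1) and sub = assms(2) and disc = assms(3)
  have Gc: "G \<subseteq> carrier PSL2" using sub by (rule subgroup.subset)
  have tor: "\<And>H. H \<subseteq> G \<Longrightarrow> \<forall>g\<in>H. g \<otimes>\<^bsub>PSL2\<^esub> g = \<one>\<^bsub>PSL2\<^esub> \<longrightarrow> g = \<one>\<^bsub>PSL2\<^esub>"
    using assms(4) unfolding no_2_torsion_def by blast
  have vert: "\<And>V. BT_vertex v V \<Longrightarrow> unique_lift (stab_vertex G V)"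
  proof -
    fix V assume V: "BT_vertex v V"
    have subH: "subgroup (stab_vertex G V) PSL2" unfolding stab_vertex_def
      by (rule stab_subgroup[OF sub act_vertex_mult act_vertex_one act_vertex_neg[OF V]])
    have "stab_vertex G V \<subseteq> {g\<in>G. \<exists>A\<in>g. act_vertex A V = V}"
    proof
      fix g assume g: "g \<in> stab_vertex G V"
      then have "g \<in> G" "\<forall>A\<in>g. act_vertex A V = V" by (auto simp: stab_vertex_def)
      moreover obtain A where "A \<in> g" using PSL2_nonempty Gc \<open>g \<in> G\<close> by blast
      ultimately show "g \<in> {g\<in>G. \<exists>A\<in>g. act_vertex A V = V}" by blast
    qed
    then have fin: "finite (stab_vertex G V)"
      using transporter_finite[OF nl sub disc V V] finite_subset by blast
    have "stab_vertex G V \<subseteq> G" by (auto simp: stab_vertex_def)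
    then show "unique_lift (stab_vertex G V)" using finite_lift[OF subH fin tor] by blast
  qed
  have edge: "\<And>e. BT_edge v e \<Longrightarrow> unique_lift (stab_edge G e)"
  proof -
    fix e assume "BT_edge v e"
    then obtain V W where V: "BT_vertex v V" and W: "BT_vertex v W" and e: "e = {V, W}"
      unfolding BT_edge_def by blast
    have ev: "\<forall>U\<in>e. BT_vertex v U" using V W e by blast
    have subH: "subgroup (stab_edge G e) PSL2" unfolding stab_edge_def
      by (rule stab_subgroup[OF sub act_edge_mult act_edge_one act_edge_neg[OF ev]])
    have "stab_edge G e \<subseteq> {g\<in>G. \<exists>A\<in>g. act_vertex A V = V} \<union> {g\<in>G. \<exists>A\<in>g. act_vertex A V = W}"
    proof
      fix g assume g: "g \<in> stab_edge G e"
      then have gG: "g \<in> G" and st: "\<forall>A\<in>g. act_edge A e = e" by (auto simp: stab_edge_def)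
      obtain A where A: "A \<in> g" using PSL2_nonempty Gc gG by blast
      have "act_vertex A V \<in> act_edge A e" unfolding act_edge_def e by simp
      then have "act_vertex A V \<in> e" using st A by simp
      then have "act_vertex A V = V \<or> act_vertex A V = W" using e by simp
      then show "g \<in> {g\<in>G. \<exists>A\<in>g. act_vertex A V = V} \<union> {g\<in>G. \<exists>A\<in>g. act_vertex A V = W}"
        using gG A by blast
    qed
    then have fin: "finite (stab_edge G e)"
      using transporter_finite[OF nl sub disc V V] transporter_finite[OF nl sub disc V W]
        finite_subset by blast
    have "stab_edge G e \<subseteq> G" by (auto simp: stab_edge_def)
    then show "unique_lift (stab_edge G e)" using finite_lift[OF subH fin tor] by blast
  qed
  show ?thesis using vert edge by blast
qed

end
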